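(* Let $X$ be a finite topological space and $x,y\in X$. Then $\Psi(x,y)=0$ if and only if $\Psi(x,a)\le \Psi(y,a)$ for every $a\in X$ (i.e. every entry in the row of $x$ of the furtherness matrix is at most the corresponding entry in the row of $y$).
   Context: For a finite topological space $X$ and $x\in X$, $U_x$ denotes the minimal open set containing $x$. A nested sequence of open sets around $x$ is a finite sequence $U_0\subsetneq U_1\subsetneq\cdots\subsetneq U_m=X$ of open sets with $U_0=U_x$ such that for each $j$ there is no open set $V$ with $U_j\subsetneq V\subsetneq U_{j+1}$. The furtherness function $\Psi:X\times X\to\{0,1,\dots,|X|-1\}$ is defined by: $\Psi(x,y)$ is the smallest integer $k\ge 0$ such that there exists a nested sequence $(U_j)_{j\ge0}$ of open sets around $x$ with $y\in U_k$. For $X=\{a_1,\dots,a_n\}$, the furtherness matrix $\Psi(X)$ is the $n\times n$ matrix with $(i,j)$ entry $\Psi(a_i,a_j)$. *)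

theory Defs
  imports "HOL-Analysis.Analysis"
begin

definition minimal_open :: "'a topology \<Rightarrow> 'a \<Rightarrow> 'a set" where
  "minimal_open T x = \<Inter>{U. openin T U \<and> x \<in> U}"

definition nested_seq :: "'a topology \<Rightarrow> 'a \<Rightarrow> (nat \<Rightarrow> 'a set) \<Rightarrow> nat \<Rightarrow> bool" where
  "nested_seq T x U m \<longleftrightarrow>
     U 0 = minimal_open T x \<and> U m = topspace T \<and>
     (\<forall>j\<le>m. openin T (U j)) \<and>
     (\<forall>j<m. U j \<subset> U (Suc j)) \<and>
     (\<forall>j<m. \<not> (\<exists>V. openin T V \<and> U j \<subset> V \<and> V \<subset> U (Suc j)))"

definition furtherness :: "'a topology \<Rightarrow> 'a \<Rightarrow> 'a \<Rightarrow> nat" where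
  "furtherness T x y = (LEAST k. \<exists>U m. nested_seq T x U m \<and> k \<le> m \<and> y \<in> U k)"

end

theory Submission
  imports Defs
begin

definition gchain :: "'a topology \<Rightarrow> 'a set \<Rightarrow> (nat \<Rightarrow> 'a set) \<Rightarrow> nat \<Rightarrow> bool" where
  "gchain T A U m \<longleftrightarrow>
     U 0 = A \<and> U m = topspace T \<and>
     (\<forall>j\<le>m. openin T (U j)) \<and>
     (\<forall>j<m. U j \<subset> U (Suc j)) \<and>
     (\<forall>j<m. \<not> (\<exists>V. openin T V \<and> U j \<subset> V \<and> V \<subset> U (Suc j)))"

lemma nested_gchain: "nested_seq T x U m = gchain T (minimal_open T x) U m"
  unfolding nested_seq_def gchain_def by simp

lemma minimal_open_props:
  assumes fin: "finite (topspace T)" and x: "x \<in> topspace T"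
  shows "openin T (minimal_open T x)" "x \<in> minimal_open T x"
    "\<And>U. openin T U \<Longrightarrow> x \<in> U \<Longrightarrow> minimal_open T x \<subseteq> U"
proof -
  let ?F = "{U. openin T U \<and> x \<in> U}"
  have "?F \<subseteq> Pow (topspace T)" using openin_subset by auto
  hence finF: "finite ?F" using fin by (meson finite_Pow_iff finite_subset)
  have ne: "?F \<noteq> {}" using x by auto
  show "openin T (minimal_open T x)" unfolding minimal_open_def
    using finF ne by (intro openin_Inter) auto
  show "x \<in> minimal_open T x" unfolding minimal_open_def by auto
  show "\<And>U. openin T U \<Longrightarrow> x \<in> U \<Longrightarrow> minimal_open T x \<subseteq> U"
    unfolding minimal_open_def by auto
qed

lemma gchain_exists_aux:
  assumes fin: "finite (topspace T)"
  shows "\<And>A. card (topspace T - A) = n \<Longrightarrow> openin T A \<Longrightarrow> \<exists>U m. gchain T A U m"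
proof (induction n rule: less_induct)
  case (less n A)
  show ?case
  proof (cases "A = topspace T")
    case True
    then show ?thesis unfolding gchain_def
      by (rule_tac x="\<lambda>_. A" in exI, rule_tac x=0 in exI) (simp add: less.prems)
  next
    case False
    let ?S = "{B. openin T B \<and> A \<subset> B}"
    have AX: "A \<subseteq> topspace T" using less.prems openin_subset by auto
    have "?S \<subseteq> Pow (topspace T)" using openin_subset by auto
    hence finS: "finite ?S" using fin by (meson finite_Pow_iff finite_subset)
    have "topspace T \<in> ?S" using False AX by auto
    hence ne: "?S \<noteq> {}" by blast
    obtain B where B: "B \<in> ?S" and Bmin: "\<forall>C\<in>?S. C \<subseteq> B \<longrightarrow> B = C"
      using finite_has_minimal[OF finS ne] by blast
    have BX: "B \<subseteq> topspace T" using B openin_subset by auto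
    have "card (topspace T - B) < card (topspace T - A)"
      using B AX BX fin by (intro psubset_card_mono) auto
    then obtain U' m' where U': "gchain T B U' m'"
      using less.IH less.prems B by blast
    define U where "U = (\<lambda>j. if j = 0 then A else U' (j - 1))"
    have "gchain T A U (Suc m')"
      using U' B Bmin less.prems unfolding gchain_def U_def
      apply (intro conjI)
          apply simp
         apply simp
    proof -
      show "\<forall>j\<le>Suc m'. openin T (if j = 0 then A else U' (j - 1))"
        using U' less.prems unfolding gchain_def by auto
      show "\<forall>j<Suc m'. (if j = 0 then A else U' (j - 1)) \<subset> (if Suc j = 0 then A else U' (Suc j - 1))"
      proof (intro allI impI)
        fix j assume "j < Suc m'"
        then show "(if j = 0 then A else U' (j - 1)) \<subset> (if Suc j = 0 then A else U' (Suc j - 1))"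
          using U' B unfolding gchain_def by (cases j) auto
      qed
      show "\<forall>j<Suc m'. \<not> (\<exists>V. openin T V \<and> (if j = 0 then A else U' (j - 1)) \<subset> V \<and> V \<subset> (if Suc j = 0 then A else U' (Suc j - 1)))"
      proof (intro allI impI)
        fix j assume "j < Suc m'"
        then show "\<not> (\<exists>V. openin T V \<and> (if j = 0 then A else U' (j - 1)) \<subset> V \<and> V \<subset> (if Suc j = 0 then A else U' (Suc j - 1)))"
        proof (cases j)
          case 0
          then show ?thesis using U' Bmin unfolding gchain_def by auto
        next
          case (Suc i)
          then show ?thesis using U' \<open>j < Suc m'\<close> unfolding gchain_def by auto
        qed
      qed
    qed
    then show ?thesis by blast
  qed
qed

lemma gchain_exists: "finite (topspace T) \<Longrightarrow> openin T A \<Longrightarrow> \<exists>U m. gchain T A U m"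
  using gchain_exists_aux by blast


lemma dedup:
  "\<And>W A k. W 0 = A \<Longrightarrow> W m = topspace T \<Longrightarrow> (\<forall>j\<le>m. openin T (W j)) \<Longrightarrow>
    (\<forall>j<m. W j \<subseteq> W (Suc j)) \<Longrightarrow>
    (\<forall>j<m. W j = W (Suc j) \<or> \<not> (\<exists>V. openin T V \<and> W j \<subset> V \<and> V \<subset> W (Suc j))) \<Longrightarrow>
    k \<le> m \<Longrightarrow> a \<in> W k \<Longrightarrow>
    \<exists>U m' j. gchain T A U m' \<and> j \<le> k \<and> j \<le> m' \<and> a \<in> U j"
proof (induction m)
  case 0
  then show ?case unfolding gchain_def
    by (rule_tac x="\<lambda>_. A" in exI, rule_tac x=0 in exI, rule_tac x=0 in exI) auto
next
  case (Suc m W A k)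
  define W' where "W' = (\<lambda>j. W (Suc j))"
  have a': "a \<in> W' (k - 1)"
  proof (cases k)
    case 0 then show ?thesis using Suc.prems unfolding W'_def by auto
  next
    case (Suc i) then show ?thesis using Suc.prems unfolding W'_def by auto
  qed
  have "\<exists>U m' j. gchain T (W 1) U m' \<and> j \<le> k - 1 \<and> j \<le> m' \<and> a \<in> U j"
    apply (rule Suc.IH[of W' "W 1" "k - 1"])
    using Suc.prems a' unfolding W'_def by auto
  then obtain U' m' j' where U': "gchain T (W 1) U' m'" and j': "j' \<le> k - 1" "j' \<le> m'" "a \<in> U' j'"
    by blast
  show ?case
  proof (cases "W 0 = W 1")
    case True
    then show ?thesis using U' j' Suc.prems by (metis diff_le_self le_trans One_nat_def)
  next
    case False
    have sub: "W 0 \<subset> W 1" using False Suc.prems(4) by auto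
    have cov: "\<not> (\<exists>V. openin T V \<and> W 0 \<subset> V \<and> V \<subset> W 1)" using False Suc.prems(5) by auto
    define U where "U = (\<lambda>j. if j = 0 then A else U' (j - 1))"
    have g: "gchain T A U (Suc m')"
      unfolding gchain_def
    proof (intro conjI)
      show "U 0 = A" unfolding U_def by simp
      show "U (Suc m') = topspace T" using U' unfolding U_def gchain_def by simp
      show "\<forall>j\<le>Suc m'. openin T (U j)"
        using U' Suc.prems unfolding gchain_def U_def by auto
      show "\<forall>j<Suc m'. U j \<subset> U (Suc j)"
      proof (intro allI impI)
        fix j assume "j < Suc m'"
        then show "U j \<subset> U (Suc j)"
          using U' sub Suc.prems(1) unfolding gchain_def U_def by (cases j) auto
      qed
      show "\<forall>j<Suc m'. \<not> (\<exists>V. openin T V \<and> U j \<subset> V \<and> V \<subset> U (Suc j))"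
      proof (intro allI impI)
        fix j assume jm: "j < Suc m'"
        show "\<not> (\<exists>V. openin T V \<and> U j \<subset> V \<and> V \<subset> U (Suc j))"
        proof (cases j)
          case 0
          then show ?thesis using U' cov Suc.prems(1) unfolding gchain_def U_def by auto
        next
          case (Suc i)
          then show ?thesis using U' jm unfolding gchain_def U_def by auto
        qed
      qed
    qed
    show ?thesis
    proof (cases "k = 0")
      case True
      then have "a \<in> U 0" using Suc.prems unfolding U_def by auto
      then show ?thesis using g True by blast
    next
      case False
      have "a \<in> U (Suc j')" using j' unfolding U_def by simp
      moreover have "Suc j' \<le> k" "Suc j' \<le> Suc m'" using j' False by auto
      ultimately show ?thesis using g by blast
    qed
  qed
qed

lemma union_chain:
  assumes g: "gchain T B V m" and A: "openin T A" and that: "k \<le> m" "a \<in> V k"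
  shows "\<exists>U m' j. gchain T (A \<union> B) U m' \<and> j \<le> k \<and> j \<le> m' \<and> a \<in> U j"
proof -
  define W where "W = (\<lambda>j. A \<union> V j)"
  have AX: "A \<subseteq> topspace T" using A openin_subset by auto
  show ?thesis
  proof (rule dedup[of W "A \<union> B" m T k a])
    show "W 0 = A \<union> B" using g unfolding W_def gchain_def by simp
    show "W m = topspace T" using g AX unfolding W_def gchain_def by auto
    show "\<forall>j\<le>m. openin T (W j)" using g A unfolding W_def gchain_def by auto
    show "\<forall>j<m. W j \<subseteq> W (Suc j)" using g unfolding W_def gchain_def by auto
    show "k \<le> m" "a \<in> W k" using that unfolding W_def by auto
    show "\<forall>j<m. W j = W (Suc j) \<or> \<not> (\<exists>V. openin T V \<and> W j \<subset> V \<and> V \<subset> W (Suc j))"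
    proof (intro allI impI)
      fix j assume jm: "j < m"
      have sub: "V j \<subset> V (Suc j)" and cov: "\<not> (\<exists>Z. openin T Z \<and> V j \<subset> Z \<and> Z \<subset> V (Suc j))"
        and o1: "openin T (V (Suc j))"
        using g jm unfolding gchain_def by auto
      show "W j = W (Suc j) \<or> \<not> (\<exists>Z. openin T Z \<and> W j \<subset> Z \<and> Z \<subset> W (Suc j))"
      proof (rule disjI2, rule notI)
        assume "\<exists>Z. openin T Z \<and> W j \<subset> Z \<and> Z \<subset> W (Suc j)"
        then obtain Z where Z: "openin T Z" "A \<union> V j \<subset> Z" "Z \<subset> A \<union> V (Suc j)"
          unfolding W_def by blast
        have oZ: "openin T (Z \<inter> V (Suc j))" using Z o1 by auto
        have l: "V j \<subseteq> Z \<inter> V (Suc j)" using Z sub by auto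
        show False
        proof (cases "Z \<inter> V (Suc j) = V j")
          case True
          then have "Z = A \<union> V j" using Z by blast
          then show False using Z by auto
        next
          case F1: False
          show False
          proof (cases "Z \<inter> V (Suc j) = V (Suc j)")
            case True
            then have "A \<union> V (Suc j) \<subseteq> Z" using Z by blast
            then show False using Z by auto
          next
            case False
            then show False using cov oZ l F1 by blast
          qed
        qed
      qed
    qed
  qed
qed

lemma furth_le: "nested_seq T z U m \<Longrightarrow> k \<le> m \<Longrightarrow> a \<in> U k \<Longrightarrow> furtherness T z a \<le> k"
  unfolding furtherness_def by (rule Least_le) blast

lemma furth_ex:
  assumes fin: "finite (topspace T)" and z: "z \<in> topspace T" and a: "a \<in> topspace T"
  shows "\<exists>U m. nested_seq T z U m \<and> furtherness T z a \<le> m \<and> a \<in> U (furtherness T z a)"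
proof -
  obtain U m where "gchain T (minimal_open T z) U m"
    using gchain_exists[OF fin minimal_open_props(1)[OF fin z]] by blast
  then have "\<exists>k U m. nested_seq T z U m \<and> k \<le> m \<and> a \<in> U k"
    using a unfolding nested_gchain gchain_def by (rule_tac x=m in exI) auto
  then show ?thesis unfolding furtherness_def by (rule LeastI_ex)
qed

theorem mainTheorem13:
  fixes T :: "'a topology" and x y :: 'a
  assumes "finite (topspace T)" and "x \<in> topspace T" and "y \<in> topspace T"
  shows "furtherness T x y = 0 \<longleftrightarrow>
         (\<forall>a\<in>topspace T. furtherness T x a \<le> furtherness T y a)"
proof
  assume h: "furtherness T x y = 0"
  obtain U m where "nested_seq T x U m" "y \<in> U 0"
    using furth_ex[OF assms(1,2,3)] h by auto
  then have yU: "y \<in> minimal_open T x" unfolding nested_seq_def by simp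
  have sub: "minimal_open T y \<subseteq> minimal_open T x"
    using minimal_open_props(3)[OF assms(1,3) minimal_open_props(1)[OF assms(1,2)] yU] .
  show "\<forall>a\<in>topspace T. furtherness T x a \<le> furtherness T y a"
  proof
    fix a assume a: "a \<in> topspace T"
    obtain V m where V: "nested_seq T y V m" "furtherness T y a \<le> m" "a \<in> V (furtherness T y a)"
      using furth_ex[OF assms(1,3) a] by blast
    have gV: "gchain T (minimal_open T y) V m" using V(1) nested_gchain by metis
    obtain W m' j where W: "gchain T (minimal_open T x \<union> minimal_open T y) W m'"
      "j \<le> furtherness T y a" "j \<le> m'" "a \<in> W j"
      using union_chain[OF gV minimal_open_props(1)[OF assms(1,2)] V(2,3)] by blast
    have "minimal_open T x \<union> minimal_open T y = minimal_open T x" using sub by blast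
    then have "nested_seq T x W m'" using W(1) nested_gchain by metis
    then have "furtherness T x a \<le> j" using furth_le[of T x W m' j a] W(3,4) by simp
    then show "furtherness T x a \<le> furtherness T y a" using W(2) by linarith
  qed
next
  assume "\<forall>a\<in>topspace T. furtherness T x a \<le> furtherness T y a"
  then have "furtherness T x y \<le> furtherness T y y" using assms by blast
  moreover obtain U m where "nested_seq T y U m"
    using furth_ex[OF assms(1,3,3)] by blast
  then have "furtherness T y y \<le> 0"
    using furth_le[of T y U m 0 y] minimal_open_props(2)[OF assms(1,3)] unfolding nested_seq_def
    by simp
  ultimately show "furtherness T x y = 0" by linarith
qed

end
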